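(* For each integer $k\ge 2$ there exists a complete tripartite graph that is uniquely $k$-list colorable. (For instance, $K_{N,N,N}$ with $N=(k-1)\binom{2k-2}{k-1}$ is such a graph.)
   Context: All graphs are finite, simple and undirected. A list assignment $L$ for a graph $G$ assigns to each vertex $v$ a set $L(v)$ of colors; an $L$-coloring is a proper vertex coloring $c$ of $G$ with $c(v)\in L(v)$ for every vertex $v$. A $k$-list assignment is a list assignment with $|L(v)|=k$ for all $v$. $G$ is uniquely $k$-list colorable (U$k$LC) if there exists a $k$-list assignment $L$ such that $G$ has exactly one $L$-coloring. $K_{n_1,\dots,n_r}$ denotes the complete $r$-partite graph with parts of sizes $n_1,\dots,n_r$. *)

theory Defs
  imports Main
begin

text \<open>A finite simple graph is given by a vertex set V and a symmetric irreflexive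
adjacency relation E.\<close>

definition is_L_coloring ::
  "'v set \<Rightarrow> ('v \<Rightarrow> 'v \<Rightarrow> bool) \<Rightarrow> ('v \<Rightarrow> 'c set) \<Rightarrow> ('v \<Rightarrow> 'c) \<Rightarrow> bool" where
  "is_L_coloring V E L c \<longleftrightarrow>
     (\<forall>v\<in>V. c v \<in> L v) \<and> (\<forall>u\<in>V. \<forall>v\<in>V. E u v \<longrightarrow> c u \<noteq> c v)"

definition is_k_list_assignment :: "'v set \<Rightarrow> nat \<Rightarrow> ('v \<Rightarrow> 'c set) \<Rightarrow> bool" where
  "is_k_list_assignment V k L \<longleftrightarrow> (\<forall>v\<in>V. finite (L v) \<and> card (L v) = k)"

definition uniquely_k_list_colorable ::
  "'v set \<Rightarrow> ('v \<Rightarrow> 'v \<Rightarrow> bool) \<Rightarrow> nat \<Rightarrow> bool" where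
  "uniquely_k_list_colorable V E k \<longleftrightarrow>
     (\<exists>L :: 'v \<Rightarrow> nat set. is_k_list_assignment V k L \<and>
        (\<exists>c. is_L_coloring V E L c \<and>
             (\<forall>c'. is_L_coloring V E L c' \<longrightarrow> (\<forall>v\<in>V. c' v = c v))))"

text \<open>Complete multipartite graph K_{n_1,...,n_r}: vertices (i,j) with i < r, j < n_i;
two vertices are adjacent iff they lie in different parts.\<close>
definition cmp_vertices :: "nat list \<Rightarrow> (nat \<times> nat) set" where
  "cmp_vertices ns = {(i, j). i < length ns \<and> j < ns ! i}"

definition cmp_edge :: "nat \<times> nat \<Rightarrow> nat \<times> nat \<Rightarrow> bool" where
  "cmp_edge u v \<longleftrightarrow> fst u \<noteq> fst v"

end

theory Submission
  imports Defs
begin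

lemma three_cases: "(i::nat) < 3 \<Longrightarrow> i = 0 \<or> i = 1 \<or> i = 2"
  by auto

lemma cmp3: "cmp_vertices [a, b, c] = {(i,j). i < 3 \<and> j < [a,b,c] ! i}"
  by (simp add: cmp_vertices_def numeral_3_eq_3)

theorem theorem3p1:
  fixes k :: nat
  assumes "k \<ge> 2"
  shows "\<exists>n1 n2 n3 :: nat. n1 \<ge> 1 \<and> n2 \<ge> 1 \<and> n3 \<ge> 1 \<and>
           uniquely_k_list_colorable (cmp_vertices [n1, n2, n3]) cmp_edge k"
proof -
  define m where "m = k - 1"
  have m1: "m \<ge> 1" and km: "k = Suc m" using assms by (auto simp: m_def)
  define C where "C i = {i*m..<Suc i*m}" for i :: nat
  define U where "U = {..<3*m}"
  define P where "P i = {(c,S). c \<in> C i \<and> S \<subseteq> U - C i \<and> card S = m}" for i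
  have cardC: "card (C i) = m" for i by (simp add: C_def)
  have finC: "finite (C i)" for i by (simp add: C_def)
  have finU: "finite U" by (simp add: U_def)
  have Ucov: "U = C 0 \<union> C 1 \<union> C 2" by (auto simp: U_def C_def)
  have CU: "C i \<subseteq> U" if "i < 3" for i
    using three_cases[OF that] Ucov by auto
  have disj: "C i \<inter> C l = {}" if "i < 3" "l < 3" "i \<noteq> l" for i l
    using three_cases[OF that(1)] three_cases[OF that(2)] that(3)
    by (auto simp: C_def)
  have Ocov: "\<exists>l<3. l \<noteq> i \<and> x \<in> C l" if "i < 3" "x \<in> U - C i" for i x
  proof -
    have "x \<in> C 0 \<or> x \<in> C 1 \<or> x \<in> C 2" using that Ucov by auto
    then show ?thesis
    proof (elim disjE)
      assume "x \<in> C 0" then show ?thesis using that by (intro exI[of _ 0]) (cases "i = 0"; auto)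
    next
      assume "x \<in> C 1" then show ?thesis using that by (intro exI[of _ 1]) (cases "i = 1"; auto)
    next
      assume "x \<in> C 2" then show ?thesis using that by (intro exI[of _ 2]) (cases "i = 2"; auto)
    qed
  qed
  have cardO: "card (U - C i) = 2*m" if "i < 3" for i
    using card_Diff_subset[OF finC CU[OF that]] cardC by (simp add: U_def)
  have finP: "finite (P i)" for i
  proof -
    have "P i \<subseteq> C i \<times> Pow U" by (auto simp: P_def)
    then show ?thesis using finC finU finite_subset by (metis finite_Pow_iff finite_SigmaI)
  qed
  have neP: "P i \<noteq> {}" if i3: "i < 3" for i
  proof -
    obtain S where S: "S \<subseteq> U - C i" "card S = m" using cardO[OF i3]
      by (metis obtain_subset_with_card_n le_add2 mult_2)
    have "i*m \<in> C i" using m1 by (simp add: C_def)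
    then have "(i*m, S) \<in> P i" using S by (simp add: P_def)
    then show ?thesis by auto
  qed
  have "\<forall>i. \<exists>(n::nat) f. P i = f ` {j. j < n}"
    proof
    fix i show "\<exists>(n::nat) f. P i = f ` {j. j < n}"
      using finite_imp_nat_seg_image_inj_on[OF finP[of i]] by blast
  qed
  then have "\<exists>N::nat\<Rightarrow>nat. \<forall>i. \<exists>f. P i = f ` {j. j < N i}" by (rule choice)
  then obtain N :: "nat \<Rightarrow> nat" where "\<forall>i. \<exists>f. P i = f ` {j. j < N i}" by blast
  then have "\<exists>F::nat\<Rightarrow>nat\<Rightarrow>nat\<times>nat set. \<forall>i. P i = F i ` {j. j < N i}" by (rule choice)
  then obtain F :: "nat \<Rightarrow> nat \<Rightarrow> nat \<times> nat set" where NF: "\<And>i. P i = F i ` {j. j < N i}" by blast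
  have N1: "N i \<ge> 1" if "i < 3" for i
    using neP[OF that] NF[of i] by (cases "N i") auto
  define V where "V = cmp_vertices [N 0, N 1, N 2]"
  have V_eq: "V = {(i,j). i < 3 \<and> j < N i}"
  proof -
    have "[N 0, N 1, N 2] ! i = N i" if "i < 3" for i
      using three_cases[OF that] by auto
    then show ?thesis unfolding V_def cmp3 by auto
  qed
  have FP: "F i j \<in> P i" if "j < N i" for i j using NF[of i] that by auto
  define L where "L = (\<lambda>(i,j). insert (fst (F i j)) (snd (F i j)))"
  define c0 where "c0 = (\<lambda>(i::nat,j::nat). fst (F i j))"
  have Lprops: "fst (F i j) \<in> C i \<and> snd (F i j) \<subseteq> U - C i \<and> card (snd (F i j)) = m"
    if "j < N i" for i j using FP[OF that] by (auto simp: P_def)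
  have klist: "is_k_list_assignment V k L"
    unfolding is_k_list_assignment_def
  proof
    fix v assume "v \<in> V"
    then obtain i j where v: "v = (i,j)" "i < 3" "j < N i" by (auto simp: V_eq)
    have fs: "finite (snd (F i j))" using Lprops[OF v(3)] finU finite_subset by blast
    have "fst (F i j) \<notin> snd (F i j)" using Lprops[OF v(3)] by auto
    then show "finite (L v) \<and> card (L v) = k" using fs Lprops[OF v(3)] by (simp add: L_def v km)
  qed
  have c0col: "is_L_coloring V cmp_edge L c0"
    unfolding is_L_coloring_def
  proof
    show "\<forall>v\<in>V. c0 v \<in> L v" by (auto simp: L_def c0_def)
    show "\<forall>u\<in>V. \<forall>v\<in>V. cmp_edge u v \<longrightarrow> c0 u \<noteq> c0 v"
    proof (intro ballI impI)
      fix u v assume "u \<in> V" "v \<in> V" "cmp_edge u v"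
      then obtain i j l h where uv: "u = (i,j)" "v = (l,h)" "i < 3" "j < N i" "l < 3" "h < N l" "i \<noteq> l"
        by (auto simp: V_eq cmp_edge_def)
      show "c0 u \<noteq> c0 v" using Lprops[OF uv(4)] Lprops[OF uv(6)] disj[OF uv(3,5,7)]
        by (auto simp: c0_def uv)
    qed
  qed
  have uniq: "\<forall>v\<in>V. c' v = c0 v" if col: "is_L_coloring V cmp_edge L c'" for c'
  proof -
    define D where "D i = (\<lambda>j. c' (i,j)) ` {..<N i}" for i
    have inL: "c' (i,j) \<in> L (i,j)" if "i < 3" "j < N i" for i j
      using col that unfolding is_L_coloring_def by (auto simp: V_eq)
    have DU: "D i \<subseteq> U" if "i < 3" for i
    proof
      fix x assume "x \<in> D i"
      then obtain j where j: "j < N i" "x = c' (i,j)" by (auto simp: D_def)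
      show "x \<in> U" using inL[OF that j(1)] Lprops[OF j(1)] CU[OF that] by (auto simp: L_def j(2))
    qed
    have finD: "finite (D i)" for i by (simp add: D_def)
    have Ddisj: "D i \<inter> D l = {}" if "i < 3" "l < 3" "i \<noteq> l" for i l
    proof -
      have "c' (i,j) \<noteq> c' (l,h)" if "j < N i" "h < N l" for j h
        using col \<open>i<3\<close> \<open>l<3\<close> \<open>i\<noteq>l\<close> that unfolding is_L_coloring_def
        by (auto simp: V_eq cmp_edge_def)
      then show ?thesis by (auto simp: D_def)
    qed
    have key: "C i \<subseteq> D i \<or> card (D i) \<ge> Suc m" if "i < 3" for i
    proof (rule ccontr)
      assume "\<not> (C i \<subseteq> D i \<or> card (D i) \<ge> Suc m)"
      then obtain c where c: "c \<in> C i" "c \<notin> D i" and cd: "card (D i) \<le> m" by auto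
      have "card (U - C i) - card (D i) \<le> card ((U - C i) - D i)"
        using diff_card_le_card_Diff[OF finD] .
      then have "m \<le> card ((U - C i) - D i)" using cardO[OF that] cd by simp
      then obtain S where S: "S \<subseteq> (U - C i) - D i" "card S = m"
        by (metis obtain_subset_with_card_n)
      have "(c, S) \<in> P i" using c S by (auto simp: P_def)
      then obtain j where j: "j < N i" "F i j = (c, S)" using NF[of i] by auto
      have "c' (i,j) \<in> insert c S" using inL[OF that j(1)] by (simp add: L_def j(2))
      moreover have "c' (i,j) \<in> D i" using j by (auto simp: D_def)
      ultimately show False using c S by auto
    qed
    have allC: "C i \<subseteq> D i" if "i < 3" for i
    proof (rule ccontr)
      assume nc: "\<not> C i \<subseteq> D i"
      have ge: "card (D l) \<ge> m" if "l < 3" for l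
        using key[OF that] card_mono[OF finD, of "C l" l] cardC by force
      have gi: "card (D i) \<ge> Suc m" using key[OF that] nc by auto
      have "card (D 0 \<union> D 1 \<union> D 2) = card (D 0) + card (D 1) + card (D 2)"
        using Ddisj[of 0 1] Ddisj[of 0 2] Ddisj[of 1 2] finD
        by (simp add: card_Un_disjoint Int_Un_distrib2)
      moreover have "card (D 0 \<union> D 1 \<union> D 2) \<le> 3*m"
        using card_mono[OF finU, of "D 0 \<union> D 1 \<union> D 2"] DU[of 0] DU[of 1] DU[of 2]
        by (simp add: U_def)
      moreover have "card (D 0) + card (D 1) + card (D 2) \<ge> 3*m + 1"
        using three_cases[OF that] gi ge[of 0] ge[of 1] ge[of 2] by auto
      ultimately show False by simp
    qed
    show ?thesis
    proof
      fix v assume "v \<in> V"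
      then obtain i j where v: "v = (i,j)" "i < 3" "j < N i" by (auto simp: V_eq)
      have cin: "c' (i,j) \<in> insert (fst (F i j)) (snd (F i j))" using inL[OF v(2,3)] by (simp add: L_def)
      have "c' (i,j) \<notin> snd (F i j)"
      proof
        assume "c' (i,j) \<in> snd (F i j)"
        then have "c' (i,j) \<in> U - C i" using Lprops[OF v(3)] by auto
        then obtain l where l: "l < 3" "l \<noteq> i" "c' (i,j) \<in> C l" using Ocov[OF v(2)] by blast
        have "c' (i,j) \<in> D l" using allC[OF l(1)] l(3) by auto
        moreover have "c' (i,j) \<in> D i" using v by (auto simp: D_def)
        ultimately show False using Ddisj[OF v(2) l(1)] l(2) by auto
      qed
      then show "c' v = c0 v" using cin by (simp add: v c0_def)
    qed
  qed
  have "uniquely_k_list_colorable V cmp_edge k"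
    unfolding uniquely_k_list_colorable_def using klist c0col uniq by blast
  then show ?thesis using N1[of 0] N1[of 1] N1[of 2] unfolding V_def by auto
qed

end
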